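(* Let $\mathbb{A}$ be an epistemic Heyting algebra, $a\in\mathbb{A}$, $b\in\mathbb{A}$ and $i\in\mathsf{Ag}$. The following are equivalent: (1) $[b]\in\mathsf{Min}_i(\mathbb{A}^a)$; (2) $[b]=[b']$ for a unique $b'\in\mathsf{Min}_i(\mathbb{A})$ such that $b'\wedge a\neq\bot$.
   Context: Fix a set $\mathsf{Ag}$ of agents. A monadic Heyting algebra is a Heyting algebra $\mathbb{L}$ with, for each $i\in\mathsf{Ag}$, monotone unary operations $\lozenge_i,\Box_i$ such that for all $a,b$: $a\leq\lozenge_i a$; $\Box_i a\leq a$; $\lozenge_i(a\vee b)\leq\lozenge_i a\vee\lozenge_i b$; $\Box_i(a\to b)\leq\Box_i a\to\Box_i b$; $\lozenge_i a\leq\Box_i\lozenge_i a$; $\lozenge_i\Box_i a\leq\Box_i a$; $\Box_i(a\to b)\leq\lozenge_i a\to\lozenge_i b$; $\lozenge_i\bot\leq\bot$; $\top\leq\Box_i\top$. An epistemic Heyting algebra is a finite monadic Heyting algebra with $\lozenge_i a\vee\neg\lozenge_i a=\top$ for all $i,a$. An element $c$ is $i$-minimal if $c\neq\bot$, $\lozenge_i c=c$, and whenever $d<c$ and $\lozenge_i d=d$ then $d=\bot$; $\mathsf{Min}_i(\cdot)$ is the set of $i$-minimal elements. The pseudo-quotient algebra $\mathbb{A}^a$: $b\cong_a c$ iff $b\wedge a=c\wedge a$; carrier the quotient Heyting algebra $\mathbb{L}/{\cong_a}$ with classes $[c]$ ($[b]\leq[c]$ iff $b\wedge a\leq c\wedge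 a$); $\lozenge^a_i[b]=[\lozenge_i(b\wedge a)]$, $\Box^a_i[b]=[\Box_i(a\to b)]$; $i$-minimality in $\mathbb{A}^a$ is w.r.t. $\lozenge^a_i$. *)

theory Defs
  imports Main
begin

unbundle lattice_syntax

text \<open>A Heyting algebra is rendered as a bounded lattice (type class) together with an
  implication operation satisfying residuation (distributivity is then automatic).\<close>

definition heyting_imp :: "('a::bounded_lattice \<Rightarrow> 'a \<Rightarrow> 'a) \<Rightarrow> bool" where
  "heyting_imp imp \<longleftrightarrow> (\<forall>x y z. z \<sqinter> x \<le> y \<longleftrightarrow> z \<le> imp x y)"

definition monadic_heyting_algebra ::
  "('a::bounded_lattice \<Rightarrow> 'a \<Rightarrow> 'a) \<Rightarrow> ('i \<Rightarrow> 'a \<Rightarrow> 'a) \<Rightarrow> ('i \<Rightarrow> 'a \<Rightarrow> 'a) \<Rightarrow> bool" where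
  "monadic_heyting_algebra imp dia box \<longleftrightarrow>
     heyting_imp imp \<and>
     (\<forall>i. mono (dia i) \<and> mono (box i) \<and>
       (\<forall>a b.
          a \<le> dia i a \<and>
          box i a \<le> a \<and>
          dia i (a \<squnion> b) \<le> dia i a \<squnion> dia i b \<and>
          box i (imp a b) \<le> imp (box i a) (box i b) \<and>
          dia i a \<le> box i (dia i a) \<and>
          dia i (box i a) \<le> box i a \<and>
          box i (imp a b) \<le> imp (dia i a) (dia i b)) \<and>
       dia i bot \<le> bot \<and>
       top \<le> box i top)"

definition epistemic_heyting_algebra ::
  "('a::{finite,bounded_lattice} \<Rightarrow> 'a \<Rightarrow> 'a) \<Rightarrow> ('i \<Rightarrow> 'a \<Rightarrow> 'a) \<Rightarrow> ('i \<Rightarrow> 'a \<Rightarrow> 'a) \<Rightarrow> bool" where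
  "epistemic_heyting_algebra imp dia box \<longleftrightarrow>
     monadic_heyting_algebra imp dia box \<and>
     (\<forall>i a. dia i a \<squnion> imp (dia i a) bot = top)"

text \<open>Generic i-minimality in a (quotient) poset presented by its equality eq,
  order le, diamond operation dia and bottom element bt.\<close>

definition minimal_wrt :: "('a \<Rightarrow> 'a \<Rightarrow> bool) \<Rightarrow> ('a \<Rightarrow> 'a \<Rightarrow> bool) \<Rightarrow> ('a \<Rightarrow> 'a) \<Rightarrow> 'a \<Rightarrow> 'a \<Rightarrow> bool" where
  "minimal_wrt eq le dia bt c \<longleftrightarrow>
     \<not> eq c bt \<and> eq (dia c) c \<and>
     (\<forall>d. (le d c \<and> \<not> eq d c) \<and> eq (dia d) d \<longrightarrow> eq d bt)"

definition Min_alg :: "('i \<Rightarrow> 'a::bounded_lattice \<Rightarrow> 'a) \<Rightarrow> 'i \<Rightarrow> 'a set" where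
  "Min_alg dia i = {c. minimal_wrt (=) (\<le>) (dia i) bot c}"

text \<open>Pseudo-quotient A^a, presented on representatives: classes [b] are represented by b,
  with [b] = [c] iff b \<sqinter> a = c \<sqinter> a, [b] \<le> [c] iff b \<sqinter> a \<le> c \<sqinter> a,
  dia^a_i [b] = [dia_i (b \<sqinter> a)], box^a_i [b] = [box_i (a \<rightarrow> b)].\<close>

definition pq_eq :: "'a::bounded_lattice \<Rightarrow> 'a \<Rightarrow> 'a \<Rightarrow> bool" where
  "pq_eq a b c \<longleftrightarrow> b \<sqinter> a = c \<sqinter> a"

definition pq_le :: "'a::bounded_lattice \<Rightarrow> 'a \<Rightarrow> 'a \<Rightarrow> bool" where
  "pq_le a b c \<longleftrightarrow> b \<sqinter> a \<le> c \<sqinter> a"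

definition pq_dia :: "('i \<Rightarrow> 'a::bounded_lattice \<Rightarrow> 'a) \<Rightarrow> 'a \<Rightarrow> 'i \<Rightarrow> 'a \<Rightarrow> 'a" where
  "pq_dia dia a i b = dia i (b \<sqinter> a)"

definition pq_box :: "('a \<Rightarrow> 'a \<Rightarrow> 'a) \<Rightarrow> ('i \<Rightarrow> 'a \<Rightarrow> 'a) \<Rightarrow> 'a \<Rightarrow> 'i \<Rightarrow> 'a \<Rightarrow> 'a" where
  "pq_box imp box a i b = box i (imp a b)"

definition pq_min :: "('i \<Rightarrow> 'a::bounded_lattice \<Rightarrow> 'a) \<Rightarrow> 'a \<Rightarrow> 'i \<Rightarrow> 'a \<Rightarrow> bool" where
  "pq_min dia a i b \<longleftrightarrow> minimal_wrt (pq_eq a) (pq_le a) (pq_dia dia a i) bot b"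

end

theory Submission
  imports Defs
begin

unbundle lattice_syntax

context
  fixes imp :: "'a::{finite,bounded_lattice} \<Rightarrow> 'a \<Rightarrow> 'a"
    and dia box :: "'i \<Rightarrow> 'a \<Rightarrow> 'a"
  assumes E: "epistemic_heyting_algebra imp dia box"
begin

lemma H: "z \<sqinter> x \<le> y \<longleftrightarrow> z \<le> imp x y"
  using E unfolding epistemic_heyting_algebra_def monadic_heyting_algebra_def heyting_imp_def by blast

lemma dmono: "x \<le> y \<Longrightarrow> dia i x \<le> dia i y"
  using E unfolding epistemic_heyting_algebra_def monadic_heyting_algebra_def mono_def by blast
lemma bmono: "x \<le> y \<Longrightarrow> box i x \<le> box i y"
  using E unfolding epistemic_heyting_algebra_def monadic_heyting_algebra_def mono_def by blast
lemma dext: "x \<le> dia i x"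
  using E unfolding epistemic_heyting_algebra_def monadic_heyting_algebra_def by blast
lemma bdef: "box i x \<le> x"
  using E unfolding epistemic_heyting_algebra_def monadic_heyting_algebra_def by blast
lemma d_b: "dia i x \<le> box i (dia i x)"
  using E unfolding epistemic_heyting_algebra_def monadic_heyting_algebra_def by blast
lemma db: "dia i (box i x) \<le> box i x"
  using E unfolding epistemic_heyting_algebra_def monadic_heyting_algebra_def by blast
lemma bimp: "box i (imp x y) \<le> imp (dia i x) (dia i y)"
  using E unfolding epistemic_heyting_algebra_def monadic_heyting_algebra_def by blast
lemma dbot: "dia i bot = bot"
  using E unfolding epistemic_heyting_algebra_def monadic_heyting_algebra_def
  by (meson bot.extremum_uniqueI)

lemma distr: "(x::'a) \<sqinter> (y \<squnion> z) \<le> (x \<sqinter> y) \<squnion> (x \<sqinter> z)"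
proof -
  have "y \<sqinter> x \<le> (x \<sqinter> y) \<squnion> (x \<sqinter> z)" by (simp add: inf_commute le_supI1)
  then have 1: "y \<le> imp x ((x \<sqinter> y) \<squnion> (x \<sqinter> z))" using H by blast
  have "z \<sqinter> x \<le> (x \<sqinter> y) \<squnion> (x \<sqinter> z)" by (simp add: inf_commute le_supI2)
  then have 2: "z \<le> imp x ((x \<sqinter> y) \<squnion> (x \<sqinter> z))" using H by blast
  from 1 2 have "y \<squnion> z \<le> imp x ((x \<sqinter> y) \<squnion> (x \<sqinter> z))" by simp
  then have "(y \<squnion> z) \<sqinter> x \<le> (x \<sqinter> y) \<squnion> (x \<sqinter> z)" using H by blast
  then show ?thesis by (simp add: inf_commute)
qed

lemma didem: "dia i (dia i x) = dia i x"
proof -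
  have "box i (dia i x) = dia i x" using bdef d_b by (simp add: antisym)
  then have "dia i (dia i x) \<le> dia i x" using db by metis
  then show ?thesis using dext by (simp add: antisym)
qed

lemma closed_box: assumes "dia i x = x" shows "box i x = x"
  using bdef[of i x] d_b[of i x] assms by (simp add: antisym)

lemma neg_closed: assumes "dia i x = x" shows "dia i (imp x bot) = imp x bot"
proof -
  have "imp x bot \<sqinter> x \<le> bot" using H by blast
  then have "x \<le> imp (imp x bot) bot" using H by (simp add: inf_commute)
  then have "box i x \<le> box i (imp (imp x bot) bot)" by (rule bmono)
  also have "\<dots> \<le> imp (dia i (imp x bot)) (dia i bot)" by (rule bimp)
  finally have "x \<le> imp (dia i (imp x bot)) bot" using closed_box[OF assms] dbot by simp
  then have "dia i (imp x bot) \<sqinter> x \<le> bot" using H by (simp add: inf_commute)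
  then have "dia i (imp x bot) \<le> imp x bot" using H by blast
  then show ?thesis using dext by (simp add: antisym)
qed

lemma compl: assumes "dia i x = x" shows "x \<squnion> imp x bot = top"
proof -
  have "\<forall>i a. dia i a \<squnion> imp (dia i a) bot = top"
    using E unfolding epistemic_heyting_algebra_def by blast
  then have "dia i x \<squnion> imp (dia i x) bot = top" by blast
  then show ?thesis using assms by simp
qed

lemma meet_closed: assumes "dia i x = x" "dia i y = y" shows "dia i (x \<sqinter> y) = x \<sqinter> y"
proof -
  have "dia i (x \<sqinter> y) \<le> x" using dmono[of "x \<sqinter> y" x i] assms by simp
  moreover have "dia i (x \<sqinter> y) \<le> y" using dmono[of "x \<sqinter> y" y i] assms by simp
  ultimately show ?thesis using dext[of "x \<sqinter> y" i] by (simp add: antisym)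
qed

lemma atom_meet: assumes c: "c \<in> Min_alg dia i" and y: "dia i y = y" shows "c \<sqinter> y = bot \<or> c \<le> y"
proof (cases "c \<sqinter> y = c")
  case True then show ?thesis by (simp add: le_iff_inf)
next
  case False
  have cc: "dia i c = c" using c unfolding Min_alg_def minimal_wrt_def by blast
  have "dia i (c \<sqinter> y) = c \<sqinter> y" using meet_closed[OF cc y] .
  moreover have "c \<sqinter> y \<le> c" by simp
  ultimately have "c \<sqinter> y = bot" using False c unfolding Min_alg_def minimal_wrt_def by blast
  then show ?thesis by simp
qed

lemma atom_dia: assumes c: "c \<in> Min_alg dia i" and zc: "z \<le> c" and zn: "z \<noteq> bot" shows "dia i z = c"
proof (rule ccontr)
  assume ne: "dia i z \<noteq> c"
  have cc: "dia i c = c" using c unfolding Min_alg_def minimal_wrt_def by blast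
  have le: "dia i z \<le> c" using dmono[of z c i] zc cc by simp
  have cl: "dia i (dia i z) = dia i z" by (rule didem)
  have m: "\<forall>d. (d \<le> c \<and> d \<noteq> c) \<and> dia i d = d \<longrightarrow> d = bot"
    using c unfolding Min_alg_def minimal_wrt_def by blast
  have "dia i z = bot" using m le ne cl by blast
  then have "z \<le> bot" using dext[of z i] by simp
  then show False using zn by (simp add: bot_unique)
qed

lemma atoms_disjoint: assumes "c1 \<in> Min_alg dia i" "c2 \<in> Min_alg dia i" "c1 \<noteq> c2"
  shows "c1 \<sqinter> c2 = bot"
proof (rule ccontr)
  assume n: "c1 \<sqinter> c2 \<noteq> bot"
  have "dia i c2 = c2" "dia i c1 = c1" using assms unfolding Min_alg_def minimal_wrt_def by blast+
  then have "c1 \<le> c2" "c2 \<le> c1" using atom_meet[OF assms(1), of c2] atom_meet[OF assms(2), of c1] n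
    by (auto simp: inf_commute)
  then show False using assms(3) by simp
qed

lemma exists_atom: assumes xn: "x \<noteq> bot"
  shows "\<exists>c \<in> Min_alg dia i. c \<sqinter> x \<noteq> bot \<and> c \<le> dia i x"
proof -
  define S where "S = {c. dia i c = c \<and> c \<sqinter> x \<noteq> bot \<and> c \<le> dia i x}"
  have "dia i x \<sqinter> x = x" using dext[of x i] by (simp add: inf_absorb2)
  then have "dia i x \<in> S" unfolding S_def using didem[of i x] xn by simp
  then have "S \<noteq> {}" by blast
  then obtain c where cS: "c \<in> S" and cm: "\<forall>b\<in>S. b \<le> c \<longrightarrow> c = b"
    using finite_has_minimal[OF finite[of S] \<open>S \<noteq> {}\<close>] by blast
  have cc: "dia i c = c" and cx: "c \<sqinter> x \<noteq> bot" and cd: "c \<le> dia i x"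
    using cS unfolding S_def by simp_all
  have mn: "\<And>d. d \<le> c \<Longrightarrow> d \<noteq> c \<Longrightarrow> dia i d = d \<Longrightarrow> d = bot"
  proof (rule ccontr)
    fix d assume dc: "d \<le> c" and dnc: "d \<noteq> c" and dd: "dia i d = d" and dn: "d \<noteq> bot"
    have "d \<le> dia i x" using dc cd by (rule order_trans)
    moreover have "d \<notin> S" using cm dc dnc by blast
    ultimately have dx: "d \<sqinter> x = bot" using dd unfolding S_def by simp
    define c' where "c' = c \<sqinter> imp d bot"
    have c'c: "dia i c' = c'" unfolding c'_def using meet_closed[OF cc neg_closed[OF dd]] .
    have "c' \<noteq> c"
    proof
      assume "c' = c"
      then have "c \<le> imp d bot" unfolding c'_def by (metis inf.absorb_iff1)
      then have "d \<le> imp d bot" using dc by (rule order_trans[rotated])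
      then have "d \<sqinter> d \<le> bot" using H by blast
      then show False using dn by (simp add: bot_unique)
    qed
    moreover have c'le: "c' \<le> c" unfolding c'_def by simp
    ultimately have "c' \<notin> S" using cm by blast
    moreover have "c' \<le> dia i x" using c'le cd by (rule order_trans)
    ultimately have c'x: "c' \<sqinter> x = bot" using c'c unfolding S_def by simp
    have "c \<sqinter> x = (c \<sqinter> x) \<sqinter> (d \<squnion> imp d bot)" using compl[OF dd] by simp
    also have "\<dots> \<le> ((c \<sqinter> x) \<sqinter> d) \<squnion> ((c \<sqinter> x) \<sqinter> imp d bot)" by (rule distr)
    also have "\<dots> = bot"
    proof -
      have "(c \<sqinter> x) \<sqinter> d = c \<sqinter> (d \<sqinter> x)" by (simp add: ac_simps)
      moreover have "(c \<sqinter> x) \<sqinter> imp d bot = c' \<sqinter> x" unfolding c'_def by (simp add: ac_simps)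
      ultimately show ?thesis using dx c'x by simp
    qed
    finally show False using cx by (simp add: bot_unique)
  qed
  have cb: "c \<noteq> bot" using cx by auto
  have "c \<in> Min_alg dia i"
    unfolding Min_alg_def minimal_wrt_def using cb cc mn by blast
  then show ?thesis using cx cd by blast
qed

end

theorem proposition9:
  fixes imp :: "'a::{finite,bounded_lattice} \<Rightarrow> 'a \<Rightarrow> 'a"
    and dia box :: "'i \<Rightarrow> 'a \<Rightarrow> 'a"
    and a b :: 'a and i :: 'i
  assumes "epistemic_heyting_algebra imp dia box"
  shows "pq_min dia a i b \<longleftrightarrow>
           (\<exists>!b'. b' \<in> Min_alg dia i \<and> b' \<sqinter> a \<noteq> bot \<and> pq_eq a b b')"
proof
  assume m: "pq_min dia a i b"
  have xn: "b \<sqinter> a \<noteq> bot" and fx: "dia i (b \<sqinter> a) \<sqinter> a = b \<sqinter> a"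
    and mn: "\<And>d. d \<sqinter> a \<le> b \<sqinter> a \<Longrightarrow> d \<sqinter> a \<noteq> b \<sqinter> a \<Longrightarrow> dia i (d \<sqinter> a) \<sqinter> a = d \<sqinter> a \<Longrightarrow> d \<sqinter> a = bot"
    using m unfolding pq_min_def minimal_wrt_def pq_eq_def pq_le_def pq_dia_def by auto
  obtain c where c: "c \<in> Min_alg dia i" "c \<sqinter> (b \<sqinter> a) \<noteq> bot" "c \<le> dia i (b \<sqinter> a)"
    using exists_atom[OF assms xn, of i] by blast
  have ca: "c \<sqinter> a \<le> b \<sqinter> a" using c(3) fx by (metis inf_mono order_refl)
  have cax: "c \<sqinter> a = c \<sqinter> (b \<sqinter> a)" using ca by (simp add: antisym inf.coboundedI2 le_infI1)
  have can: "c \<sqinter> a \<noteq> bot" using cax c(2) by simp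
  have "dia i (c \<sqinter> a) = c" using atom_dia[OF assms c(1) _ can] by simp
  then have "c \<sqinter> a = b \<sqinter> a" using mn[of c] ca can by auto
  then have ex: "c \<in> Min_alg dia i \<and> c \<sqinter> a \<noteq> bot \<and> pq_eq a b c" using c(1) can
    unfolding pq_eq_def by simp
  show "\<exists>!b'. b' \<in> Min_alg dia i \<and> b' \<sqinter> a \<noteq> bot \<and> pq_eq a b b'"
  proof (rule ex1I[of _ c])
    show "c \<in> Min_alg dia i \<and> c \<sqinter> a \<noteq> bot \<and> pq_eq a b c" by fact
    fix y assume y: "y \<in> Min_alg dia i \<and> y \<sqinter> a \<noteq> bot \<and> pq_eq a b y"
    show "y = c"
    proof (rule ccontr)
      assume "y \<noteq> c"
      then have "y \<sqinter> c = bot" using atoms_disjoint[OF assms] y ex by blast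
      moreover have "y \<sqinter> a = c \<sqinter> a" using y ex unfolding pq_eq_def by simp
      ultimately have "y \<sqinter> a = bot"
      proof -
        assume yc: "y \<sqinter> c = bot" and ya: "y \<sqinter> a = c \<sqinter> a"
        have "y \<sqinter> a = (y \<sqinter> a) \<sqinter> (y \<sqinter> a)" by simp
        also have "\<dots> = (y \<sqinter> a) \<sqinter> (c \<sqinter> a)" using ya by simp
        also have "\<dots> = (y \<sqinter> c) \<sqinter> a" by (simp add: ac_simps)
        finally show ?thesis using yc by simp
      qed
      then show False using y by simp
    qed
  qed
next
  assume "\<exists>!b'. b' \<in> Min_alg dia i \<and> b' \<sqinter> a \<noteq> bot \<and> pq_eq a b b'"
  then obtain c where c0: "c \<in> Min_alg dia i \<and> c \<sqinter> a \<noteq> bot \<and> pq_eq a b c"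
    by (rule ex1E)
  then have c: "c \<in> Min_alg dia i" "c \<sqinter> a \<noteq> bot" "b \<sqinter> a = c \<sqinter> a"
    unfolding pq_eq_def by simp_all
  have cc: "dia i c = c" using c(1) unfolding Min_alg_def minimal_wrt_def by blast
  have dc: "dia i (c \<sqinter> a) = c" using atom_dia[OF assms c(1) inf.cobounded1 c(2)] .
  show "pq_min dia a i b"
    unfolding pq_min_def minimal_wrt_def pq_eq_def pq_le_def pq_dia_def
  proof (intro conjI allI impI)
    show "b \<sqinter> a \<noteq> bot \<sqinter> a" using c by simp
    show "dia i (b \<sqinter> a) \<sqinter> a = b \<sqinter> a" using c(3) dc by simp
    fix d assume d: "(d \<sqinter> a \<le> b \<sqinter> a \<and> d \<sqinter> a \<noteq> b \<sqinter> a) \<and> dia i (d \<sqinter> a) \<sqinter> a = d \<sqinter> a"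
    define e where "e = dia i (d \<sqinter> a)"
    have ee: "dia i e = e" unfolding e_def using didem[OF assms] by blast
    have ec: "e \<le> c" unfolding e_def using dmono[OF assms, of "d \<sqinter> a" "c \<sqinter> a" i] d c(3) dc by simp
    have "e \<noteq> c" using d c(3) e_def by auto
    then have "e = bot" using c(1) ee ec unfolding Min_alg_def minimal_wrt_def by blast
    then show "d \<sqinter> a = bot \<sqinter> a" using d e_def by (metis inf_bot_left)
  qed
qed

end
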